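(* Let $1\leqslant k\leqslant n$, and let $P_{n,k}$ be the subgraph of $P_n$ induced by all permutations $\pi$ with $\pi_1\in\{1,\ldots,k\}$. Then: (a) the map $f_{n,k}$ from the vertices of $P_{n,k}$ to those of $P_k$, obtained by deleting from $\pi$ all entries not in $\{1,\ldots,k\}$, is a graph homomorphism $P_{n,k}\to P_k$; (b) $\chi(P_{n,k})=\chi(P_k)$.
   Context: For $n\geqslant 1$, the Pancake graph $P_n$ is the Cayley graph on the symmetric group $\mathrm{Sym}_n$, with permutations written in one-line notation $\pi=[\pi_1\pi_2\ldots\pi_n]$. Its generating set consists of the prefix-reversals $r_i$, $2\leqslant i\leqslant n$. Multiplying $\pi$ on the right by $r_i$ reverses the first $i$ entries: $\pi r_i=[\pi_i\pi_{i-1}\ldots\pi_1\pi_{i+1}\ldots\pi_n]$. Two vertices $\pi,\sigma$ are adjacent iff $\sigma=\pi r_i$ for some $2\leqslant i\leqslant n$. $\chi$ denotes the chromatic number. *)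

theory Defs
  imports "HOL-Combinatorics.Multiset_Permutations"
begin

definition prefix_rev :: "nat \<Rightarrow> 'a list \<Rightarrow> 'a list" where
  "prefix_rev i xs = rev (take i xs) @ drop i xs"

definition pancake_vertices :: "nat \<Rightarrow> nat list set" where
  "pancake_vertices n = permutations_of_set {1..n}"

definition pancake_adj :: "nat \<Rightarrow> nat list \<Rightarrow> nat list \<Rightarrow> bool" where
  "pancake_adj n \<pi> \<sigma> \<longleftrightarrow> (\<exists>i\<in>{2..n}. \<sigma> = prefix_rev i \<pi>)"

text \<open>Vertex set of P_{n,k}: permutations whose first entry lies in {1..k}
  (induced subgraph: adjacency is pancake_adj n restricted to this set).\<close>
definition pancake_sub_vertices :: "nat \<Rightarrow> nat \<Rightarrow> nat list set" where
  "pancake_sub_vertices n k = {\<pi> \<in> pancake_vertices n. hd \<pi> \<in> {1..k}}"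

definition f_map :: "nat \<Rightarrow> nat list \<Rightarrow> nat list" where
  "f_map k \<pi> = filter (\<lambda>x. x \<in> {1..k}) \<pi>"

definition graph_hom ::
  "'a set \<Rightarrow> ('a \<Rightarrow> 'a \<Rightarrow> bool) \<Rightarrow> 'b set \<Rightarrow> ('b \<Rightarrow> 'b \<Rightarrow> bool) \<Rightarrow> ('a \<Rightarrow> 'b) \<Rightarrow> bool" where
  "graph_hom V E W F f \<longleftrightarrow>
     (\<forall>v\<in>V. f v \<in> W) \<and> (\<forall>u\<in>V. \<forall>v\<in>V. E u v \<longrightarrow> F (f u) (f v))"

definition proper_colouring :: "'a set \<Rightarrow> ('a \<Rightarrow> 'a \<Rightarrow> bool) \<Rightarrow> ('a \<Rightarrow> nat) \<Rightarrow> bool" where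
  "proper_colouring V E c \<longleftrightarrow> (\<forall>u\<in>V. \<forall>v\<in>V. E u v \<longrightarrow> c u \<noteq> c v)"

definition chromatic_number :: "'a set \<Rightarrow> ('a \<Rightarrow> 'a \<Rightarrow> bool) \<Rightarrow> nat" where
  "chromatic_number V E = (LEAST m. \<exists>c. (\<forall>v\<in>V. c v < m) \<and> proper_colouring V E c)"

end

theory Submission
  imports Defs
begin

lemma perm_mem: "xs \<in> permutations_of_set A \<longleftrightarrow> set xs = A \<and> distinct xs"
  by (simp add: permutations_of_set_def)

lemma chrom_le:
  assumes hom: "graph_hom V E W F f"
    and ex: "\<exists>m c. (\<forall>v\<in>W. c v < m) \<and> proper_colouring W F c"
  shows "chromatic_number V E \<le> chromatic_number W F"
proof -
  define P where "P = (\<lambda>m. \<exists>c. (\<forall>v\<in>W. c v < m) \<and> proper_colouring W F c)"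
  define Q where "Q = (\<lambda>m. \<exists>c. (\<forall>v\<in>V. c v < m) \<and> proper_colouring V E c)"
  have cw: "chromatic_number W F = Least P" unfolding chromatic_number_def P_def ..
  have cv: "chromatic_number V E = Least Q" unfolding chromatic_number_def Q_def ..
  obtain m0 where "P m0" using ex unfolding P_def by blast
  then have "P (Least P)" by (rule LeastI)
  then obtain c where c1: "\<forall>v\<in>W. c v < Least P" and c2: "proper_colouring W F c"
    unfolding P_def by blast
  have "\<forall>v\<in>V. (c \<circ> f) v < Least P" using c1 hom unfolding graph_hom_def by auto
  moreover have "proper_colouring V E (c \<circ> f)"
    using c2 hom unfolding proper_colouring_def graph_hom_def by auto
  ultimately have "Q (Least P)" unfolding Q_def by blast
  then have "Least Q \<le> Least P" by (rule Least_le)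
  then show ?thesis using cv cw by simp
qed

lemma colourable:
  assumes "finite V" and irr: "\<And>v. v \<in> V \<Longrightarrow> \<not> E v v"
  shows "\<exists>m c. (\<forall>v\<in>V. c v < m) \<and> proper_colouring V E c"
proof -
  obtain f :: "_ \<Rightarrow> nat" and m where f: "f ` V = {i. i < m}" "inj_on f V"
    using finite_imp_inj_to_nat_seg[OF assms(1)] by blast
  have "\<forall>v\<in>V. f v < m" using f(1) by auto
  moreover have "proper_colouring V E f"
    unfolding proper_colouring_def using f(2) irr by (metis inj_onD)
  ultimately show ?thesis by blast
qed

lemma prefix_rev_nth0:
  assumes "2 \<le> i" "i \<le> length xs"
  shows "prefix_rev i xs ! 0 = xs ! (i - 1)"
  using assms by (simp add: prefix_rev_def nth_append rev_nth)

lemma pancake_irrefl: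
  assumes "distinct xs" "length xs = n"
  shows "\<not> pancake_adj n xs xs"
proof
  assume "pancake_adj n xs xs"
  then obtain i where i: "2 \<le> i" "i \<le> n" "xs = prefix_rev i xs" by (auto simp: pancake_adj_def)
  then have "xs ! 0 = xs ! (i - 1)" using prefix_rev_nth0[of i xs] assms by simp
  moreover have "0 < length xs" "i - 1 < length xs" using assms i by auto
  ultimately have "0 = i - 1" using assms(1) nth_eq_iff_index_eq by blast
  then show False using i by simp
qed

lemma filter_take:
  "filter P (take i xs) = take (length (filter P (take i xs))) (filter P xs)"
proof -
  have "filter P xs = filter P (take i xs) @ filter P (drop i xs)"
    by (metis append_take_drop_id filter_append)
  then show ?thesis by (metis append_eq_conv_conj)
qed

lemma filter_prefix_rev:
  "filter P (prefix_rev i xs) = prefix_rev (length (filter P (take i xs))) (filter P xs)"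
proof -
  define a where "a = filter P (take i xs)"
  define b where "b = filter P (drop i xs)"
  have e: "filter P xs = a @ b" unfolding a_def b_def
    by (metis append_take_drop_id filter_append)
  have "filter P (prefix_rev i xs) = rev a @ b"
    unfolding prefix_rev_def a_def b_def by (simp add: rev_filter)
  also have "\<dots> = prefix_rev (length a) (a @ b)" by (simp add: prefix_rev_def)
  finally show ?thesis unfolding e[symmetric] unfolding a_def .
qed

lemma f_map_perm:
  assumes "\<pi> \<in> pancake_vertices n" "k \<le> n"
  shows "f_map k \<pi> \<in> pancake_vertices k"
  using assms by (auto simp: pancake_vertices_def perm_mem f_map_def)

lemma hom_part:
  assumes "1 \<le> k" "k \<le> n"
  shows "graph_hom (pancake_sub_vertices n k) (pancake_adj n)
                   (pancake_vertices k) (pancake_adj k) (f_map k)"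
  unfolding graph_hom_def
proof (intro conjI ballI impI)
  fix v assume "v \<in> pancake_sub_vertices n k"
  then show "f_map k v \<in> pancake_vertices k"
    using f_map_perm assms by (auto simp: pancake_sub_vertices_def)
next
  fix u v assume u: "u \<in> pancake_sub_vertices n k" and v: "v \<in> pancake_sub_vertices n k"
    and adj: "pancake_adj n u v"
  then obtain i where i: "2 \<le> i" "i \<le> n" "v = prefix_rev i u" by (auto simp: pancake_adj_def)
  have su: "set u = {1..n}" "distinct u" using u by (auto simp: pancake_sub_vertices_def pancake_vertices_def perm_mem)
  have lu: "length u = n" using su distinct_card by fastforce
  have sv: "set v = {1..n}" "distinct v" using v by (auto simp: pancake_sub_vertices_def pancake_vertices_def perm_mem)
  have "v \<noteq> []" using sv i by auto
  then have hv: "hd v = u ! (i - 1)" using prefix_rev_nth0[of i u] i lu by (simp add: hd_conv_nth)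
  have "u \<noteq> []" using lu i by auto
  then have hu: "hd u = u ! 0" by (simp add: hd_conv_nth)
  let ?P = "\<lambda>x. x \<in> {1..k}"
  define j where "j = length (filter ?P (take i u))"
  have "u ! 0 \<in> set (take i u)"
  proof -
    have "take i u ! 0 = u ! 0" using i by simp
    moreover have "0 < length (take i u)" using i lu by simp
    ultimately show ?thesis by (metis nth_mem)
  qed
  moreover have "hd u \<in> {1..k}" using u by (simp add: pancake_sub_vertices_def)
  ultimately have a: "u ! 0 \<in> set (filter ?P (take i u))" using hu by simp
  have "hd v \<in> {1..k}" using v by (simp add: pancake_sub_vertices_def)
  moreover have "u ! (i - 1) \<in> set (take i u)"
  proof -
    have "take i u ! (i - 1) = u ! (i - 1)" using i by simp
    moreover have "i - 1 < length (take i u)" using i lu by simp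
    ultimately show ?thesis by (metis nth_mem)
  qed
  ultimately have b: "u ! (i - 1) \<in> set (filter ?P (take i u))" using hv by simp
  have ne: "u ! 0 \<noteq> u ! (i - 1)" using su i lu nth_eq_iff_index_eq[of u 0 "i - 1"] by simp
  have "2 = card {u ! 0, u ! (i - 1)}" using ne by simp
  also have "\<dots> \<le> card (set (filter ?P (take i u)))" using a b by (intro card_mono) auto
  also have "\<dots> \<le> j" unfolding j_def by (rule card_length)
  finally have j2: "2 \<le> j" .
  have "filter ?P u = filter ?P (take i u) @ filter ?P (drop i u)"
    by (metis append_take_drop_id filter_append)
  then have "length (filter ?P u) = j + length (filter ?P (drop i u))"
    unfolding j_def by (metis length_append)
  then have "j \<le> length (filter ?P u)" by simp
  moreover have "length (filter ?P u) = k"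
  proof -
    have "f_map k u \<in> pancake_vertices k"
      using f_map_perm[of u n k] u assms by (simp add: pancake_sub_vertices_def)
    then have "set (f_map k u) = {1..k}" "distinct (f_map k u)"
      by (simp_all add: pancake_vertices_def perm_mem)
    then have "length (f_map k u) = k" using distinct_card[of "f_map k u"] by simp
    then show ?thesis by (simp add: f_map_def)
  qed
  ultimately have "j \<le> k" by simp
  moreover have "f_map k v = prefix_rev j (f_map k u)"
    unfolding f_map_def j_def i(3) by (rule filter_prefix_rev)
  ultimately show "pancake_adj k (f_map k u) (f_map k v)"
    using j2 unfolding pancake_adj_def by (intro bexI[of _ j]) simp_all
qed

lemma prefix_rev_append:
  "i \<le> length xs \<Longrightarrow> prefix_rev i (xs @ ys) = prefix_rev i xs @ ys"
  by (simp add: prefix_rev_def)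

lemma emb_part:
  assumes "1 \<le> k" "k \<le> n"
  shows "graph_hom (pancake_vertices k) (pancake_adj k)
           (pancake_sub_vertices n k) (pancake_adj n) (\<lambda>xs. xs @ [Suc k..<Suc n])"
  unfolding graph_hom_def
proof (intro conjI ballI impI)
  fix v assume v: "v \<in> pancake_vertices k"
  then have sv: "set v = {1..k}" "distinct v" by (auto simp: pancake_vertices_def perm_mem)
  then have "v \<noteq> []" using assms by auto
  then have "hd (v @ [Suc k..<Suc n]) = hd v" by simp
  moreover have "hd v \<in> set v" using \<open>v \<noteq> []\<close> by simp
  moreover have "set (v @ [Suc k..<Suc n]) = {1..n}" using sv assms by auto
  moreover have "distinct (v @ [Suc k..<Suc n])" using sv by auto
  ultimately show "v @ [Suc k..<Suc n] \<in> pancake_sub_vertices n k"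
    using sv unfolding pancake_sub_vertices_def pancake_vertices_def perm_mem by simp
next
  fix u v assume u: "u \<in> pancake_vertices k" and "v \<in> pancake_vertices k"
    and adj: "pancake_adj k u v"
  then obtain i where i: "2 \<le> i" "i \<le> k" "v = prefix_rev i u" by (auto simp: pancake_adj_def)
  have "length u = k" using u distinct_card[of u] by (auto simp: pancake_vertices_def perm_mem)
  then have "i \<le> length u" using i by simp
  then have e: "v @ [Suc k..<Suc n] = prefix_rev i (u @ [Suc k..<Suc n])"
    unfolding i(3) by (rule prefix_rev_append[symmetric])
  have "i \<in> {2..n}" using i assms by simp
  then show "pancake_adj n (u @ [Suc k..<Suc n]) (v @ [Suc k..<Suc n])"
    unfolding pancake_adj_def using e by blast
qed

lemma sub_colourable:
  "\<exists>m c. (\<forall>v\<in>pancake_sub_vertices n k. c v < m) \<and> proper_colouring (pancake_sub_vertices n k) (pancake_adj n) c"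
proof (rule colourable)
  have "pancake_sub_vertices n k \<subseteq> pancake_vertices n"
    by (auto simp: pancake_sub_vertices_def)
  then show "finite (pancake_sub_vertices n k)"
    by (rule finite_subset) (simp add: pancake_vertices_def)
next
  fix v assume "v \<in> pancake_sub_vertices n k"
  then have "set v = {1..n}" "distinct v"
    by (auto simp: pancake_sub_vertices_def pancake_vertices_def perm_mem)
  then have "length v = n" using distinct_card[of v] by simp
  then show "\<not> pancake_adj n v v" using pancake_irrefl \<open>distinct v\<close> by blast
qed

lemma k_colourable:
  "\<exists>m c. (\<forall>v\<in>pancake_vertices k. c v < m) \<and> proper_colouring (pancake_vertices k) (pancake_adj k) c"
proof (rule colourable)
  show "finite (pancake_vertices k)" by (simp add: pancake_vertices_def)
next
  fix v assume "v \<in> pancake_vertices k"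
  then have "set v = {1..k}" "distinct v"
    by (auto simp: pancake_vertices_def perm_mem)
  then have "length v = k" using distinct_card[of v] by simp
  then show "\<not> pancake_adj k v v" using pancake_irrefl \<open>distinct v\<close> by blast
qed

theorem mainTheorem3:
  fixes n k :: nat
  assumes "1 \<le> k" and "k \<le> n"
  shows "graph_hom (pancake_sub_vertices n k) (pancake_adj n)
                   (pancake_vertices k) (pancake_adj k) (f_map k)
       \<and> chromatic_number (pancake_sub_vertices n k) (pancake_adj n)
           = chromatic_number (pancake_vertices k) (pancake_adj k)"
proof -
  have h: "graph_hom (pancake_sub_vertices n k) (pancake_adj n)
                   (pancake_vertices k) (pancake_adj k) (f_map k)"
    using hom_part[OF assms] .
  have "chromatic_number (pancake_sub_vertices n k) (pancake_adj n)
           \<le> chromatic_number (pancake_vertices k) (pancake_adj k)"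
    using chrom_le[OF h k_colourable] .
  moreover have "chromatic_number (pancake_vertices k) (pancake_adj k)
           \<le> chromatic_number (pancake_sub_vertices n k) (pancake_adj n)"
    using chrom_le[OF emb_part[OF assms] sub_colourable] .
  ultimately show ?thesis using h by simp
qed

end
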